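(* Let $S$ be a finite right loop with $|S/\mathcal Z(S)|=k$, and let $\theta:G_S\to G_{S/\mathcal Z(S)}$ be the surjective homomorphism $f^S(y,z)\mapsto f^{S/\mathcal Z(S)}(\mathcal Z(S)\circ y,\mathcal Z(S)\circ z)$ induced by the natural projection. Then $\ker\theta$ is isomorphic to a subgroup of the abelian group $\mathcal Z(S)^{k-1}=\mathcal Z(S)\times\cdots\times\mathcal Z(S)$ ($k-1$ factors).
   Context: A right loop is a set $S$ with binary operation $\circ$ and two-sided identity $1$ such that each equation $X\circ a=b$ has a unique solution. For $y,z\in S$, $f^S(y,z):S\to S$ sends $x$ to the unique $X$ with $X\circ(y\circ z)=(x\circ y)\circ z$; $G_S\le\mathrm{Sym}(S)$ is generated by all $f^S(y,z)$. A congruence is an equivalence relation which is a right subloop of $S\times S$; an invariant right subloop is the class $T$ of $1$ under a congruence, $S/T=\{T\circ x\}$ with $(T\circ x)\circ(T\circ y)=T\circ(x\circ y)$. For congruences $\beta,\gamma$, $\gamma$ centralizes $\beta$ if there is a congruence $(\gamma|\beta)$ on the right loop $\beta\subseteq S\times S$ with: (i) $(x,y)(\gamma|\beta)(u,v)\Rightarrow x\gamma u$; (ii) for $(x,y)\in\beta$, $(u,v)\mapsto u$ is a bijection from the $(\gamma|\beta)$-class of $(x,y)$ to the $\gamma$-class of $x$; (iii) $(x,y)\in\gamma\Rightarrow(x,x)(\gamma|\beta)(y,y)$; (iv) $(x,y)(\gamma|\beta)(u,v)\Rightarrow(y,x)(\gamma|\beta)(v,u)$; (v) $(x,y)(\gamma|\beta)(u,v)$,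 $(y,z)(\gamma|\beta)(v,w)\Rightarrow(x,z)(\gamma|\beta)(u,w)$. The center congruence $\zeta(S)$ is the unique maximal congruence centralized by $S\times S$; the center $\mathcal Z(S)$ is its class of $1$, an abelian group under $\circ$. *)

theory Defs
  imports Main "HOL-Algebra.Bij" "HOL-Algebra.Generated_Groups" "HOL-Algebra.Product_Groups"
          "HOL-Algebra.Coset"
begin

definition right_loop :: "'a set \<Rightarrow> ('a \<Rightarrow> 'a \<Rightarrow> 'a) \<Rightarrow> 'a \<Rightarrow> bool" where
  "right_loop S m e \<longleftrightarrow> e \<in> S \<and> (\<forall>x\<in>S. \<forall>y\<in>S. m x y \<in> S)
     \<and> (\<forall>x\<in>S. m e x = x \<and> m x e = x)
     \<and> (\<forall>a\<in>S. \<forall>b\<in>S. \<exists>!X. X \<in> S \<and> m X a = b)"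

definition right_subloop :: "'a set \<Rightarrow> ('a \<Rightarrow> 'a \<Rightarrow> 'a) \<Rightarrow> 'a \<Rightarrow> 'a set \<Rightarrow> bool" where
  "right_subloop S m e T \<longleftrightarrow> T \<subseteq> S \<and> right_loop T m e"

definition pair_op :: "('a \<Rightarrow> 'a \<Rightarrow> 'a) \<Rightarrow> ('a \<times> 'a) \<Rightarrow> ('a \<times> 'a) \<Rightarrow> ('a \<times> 'a)" where
  "pair_op m p q = (m (fst p) (fst q), m (snd p) (snd q))"

definition rl_congruence :: "'a set \<Rightarrow> ('a \<Rightarrow> 'a \<Rightarrow> 'a) \<Rightarrow> 'a \<Rightarrow> ('a \<times> 'a) set \<Rightarrow> bool" where
  "rl_congruence S m e \<beta> \<longleftrightarrow> equiv S \<beta> \<and> right_subloop (S \<times> S) (pair_op m) (e, e) \<beta>"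

definition centralizes ::
  "'a set \<Rightarrow> ('a \<Rightarrow> 'a \<Rightarrow> 'a) \<Rightarrow> 'a \<Rightarrow> ('a \<times> 'a) set \<Rightarrow> ('a \<times> 'a) set \<Rightarrow> bool" where
  "centralizes S m e \<gamma> \<beta> \<longleftrightarrow> (\<exists>C.
     rl_congruence \<beta> (pair_op m) (e, e) C
     \<and> (\<forall>x y u v. ((x, y), (u, v)) \<in> C \<longrightarrow> (x, u) \<in> \<gamma>)
     \<and> (\<forall>x y. (x, y) \<in> \<beta> \<longrightarrow> bij_betw fst (C `` {(x, y)}) (\<gamma> `` {x}))
     \<and> (\<forall>x y. (x, y) \<in> \<gamma> \<longrightarrow> ((x, x), (y, y)) \<in> C)
     \<and> (\<forall>x y u v. ((x, y), (u, v)) \<in> C \<longrightarrow> ((y, x), (v, u)) \<in> C)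
     \<and> (\<forall>x y z u v w. ((x, y), (u, v)) \<in> C \<longrightarrow> ((y, z), (v, w)) \<in> C
          \<longrightarrow> ((x, z), (u, w)) \<in> C))"

text \<open>zeta is the center congruence: the unique maximal (= greatest) congruence
  centralized by S \<times> S.\<close>
definition is_center_congruence ::
  "'a set \<Rightarrow> ('a \<Rightarrow> 'a \<Rightarrow> 'a) \<Rightarrow> 'a \<Rightarrow> ('a \<times> 'a) set \<Rightarrow> bool" where
  "is_center_congruence S m e \<zeta> \<longleftrightarrow> rl_congruence S m e \<zeta> \<and> centralizes S m e (S \<times> S) \<zeta>
     \<and> (\<forall>\<beta>. rl_congruence S m e \<beta> \<and> centralizes S m e (S \<times> S) \<beta> \<longrightarrow> \<beta> \<subseteq> \<zeta>)"

definition fS :: "'a set \<Rightarrow> ('a \<Rightarrow> 'a \<Rightarrow> 'a) \<Rightarrow> 'a \<Rightarrow> 'a \<Rightarrow> ('a \<Rightarrow> 'a)" where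
  "fS S m y z = (\<lambda>x\<in>S. THE X. X \<in> S \<and> m X (m y z) = m (m x y) z)"

definition GS :: "'a set \<Rightarrow> ('a \<Rightarrow> 'a \<Rightarrow> 'a) \<Rightarrow> ('a \<Rightarrow> 'a) monoid" where
  "GS S m = (BijGroup S)\<lparr>carrier := generate (BijGroup S) {fS S m y z | y z. y \<in> S \<and> z \<in> S}\<rparr>"

definition rcos :: "('a \<Rightarrow> 'a \<Rightarrow> 'a) \<Rightarrow> 'a set \<Rightarrow> 'a \<Rightarrow> 'a set" where
  "rcos m T x = (\<lambda>t. m t x) ` T"

definition quot_carrier :: "'a set \<Rightarrow> ('a \<Rightarrow> 'a \<Rightarrow> 'a) \<Rightarrow> 'a set \<Rightarrow> 'a set set" where
  "quot_carrier S m T = rcos m T ` S"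

definition quot_op :: "'a set \<Rightarrow> ('a \<Rightarrow> 'a \<Rightarrow> 'a) \<Rightarrow> 'a set \<Rightarrow> 'a set \<Rightarrow> 'a set \<Rightarrow> 'a set" where
  "quot_op S m T A B = rcos m T (m (SOME x. x \<in> S \<and> A = rcos m T x) (SOME y. y \<in> S \<and> B = rcos m T y))"

text \<open>The center Z(S) (class of the identity) as a group under the loop operation.\<close>
definition center_group :: "'a \<Rightarrow> ('a \<Rightarrow> 'a \<Rightarrow> 'a) \<Rightarrow> 'a set \<Rightarrow> 'a monoid" where
  "center_group e m Z = \<lparr>carrier = Z, mult = m, one = e\<rparr>"

end

theory Submission
  imports Defs
begin

section \<open>Generic right loop facts\<close>

definition ldiv :: "'a set \<Rightarrow> ('a \<Rightarrow> 'a \<Rightarrow> 'a) \<Rightarrow> 'a \<Rightarrow> 'a \<Rightarrow> 'a" where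
  "ldiv T op b a = (THE X. X \<in> T \<and> op X a = b)"

lemma rl_ex1: "right_loop T op u \<Longrightarrow> a \<in> T \<Longrightarrow> b \<in> T \<Longrightarrow> \<exists>!X. X \<in> T \<and> op X a = b"
  unfolding right_loop_def by (elim conjE, drule bspec, assumption, drule bspec, assumption, assumption)

lemma rl_closed: "right_loop T op u \<Longrightarrow> x \<in> T \<Longrightarrow> y \<in> T \<Longrightarrow> op x y \<in> T"
  by (simp add: right_loop_def)
lemma rl_one: "right_loop T op u \<Longrightarrow> u \<in> T"
  by (simp add: right_loop_def)
lemma rl_lid: "right_loop T op u \<Longrightarrow> x \<in> T \<Longrightarrow> op u x = x"
  by (simp add: right_loop_def)
lemma rl_rid: "right_loop T op u \<Longrightarrow> x \<in> T \<Longrightarrow> op x u = x"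
  by (simp add: right_loop_def)
lemma rl_cancel: "right_loop T op u \<Longrightarrow> X \<in> T \<Longrightarrow> Y \<in> T \<Longrightarrow> a \<in> T \<Longrightarrow> op X a = op Y a \<Longrightarrow> X = Y"
proof -
  assume rl: "right_loop T op u" and h: "X \<in> T" "Y \<in> T" "a \<in> T" "op X a = op Y a"
  have "op X a \<in> T" by (rule rl_closed[OF rl h(1,3)])
  then have ex: "\<exists>!Z. Z \<in> T \<and> op Z a = op X a" by (rule rl_ex1[OF rl h(3)])
  show "X = Y" using the1_equality[OF ex, of X] the1_equality[OF ex, of Y] h by simp
qed
lemma rl_ldiv: "right_loop T op u \<Longrightarrow> a \<in> T \<Longrightarrow> b \<in> T \<Longrightarrow> ldiv T op b a \<in> T \<and> op (ldiv T op b a) a = b"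
proof -
  assume rl: "right_loop T op u" and h: "a \<in> T" "b \<in> T"
  have "\<exists>!X. X \<in> T \<and> op X a = b" by (rule rl_ex1[OF rl h])
  from theI'[OF this] show ?thesis unfolding ldiv_def .
qed
lemma rl_ldiv_eq: "right_loop T op u \<Longrightarrow> a \<in> T \<Longrightarrow> X \<in> T \<Longrightarrow> ldiv T op (op X a) a = X"
proof -
  assume rl: "right_loop T op u" and h: "a \<in> T" "X \<in> T"
  have c: "op X a \<in> T" by (rule rl_closed[OF rl h(2,1)])
  show ?thesis using rl_ldiv[OF rl h(1) c] rl_cancel[OF rl _ h(2) h(1)] by simp
qed

lemma fS_char: assumes "right_loop T op u" "x \<in> T" "y \<in> T" "z \<in> T"
  shows "fS T op y z x \<in> T \<and> op (fS T op y z x) (op y z) = op (op x y) z"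
proof -
  have "\<exists>!X. X \<in> T \<and> op X (op y z) = op (op x y) z"
    by (rule rl_ex1[OF assms(1) rl_closed[OF assms(1) assms(3,4)] rl_closed[OF assms(1) rl_closed[OF assms(1) assms(2,3)] assms(4)]])
  define t where "t = (THE X. X \<in> T \<and> op X (op y z) = op (op x y) z)"
  have t: "t \<in> T \<and> op t (op y z) = op (op x y) z" using theI'[OF \<open>\<exists>!X. _\<close>] unfolding t_def .
  have "fS T op y z x = t"
    unfolding fS_def t_def using assms(2) by (rule restrict_apply')
  then show ?thesis using t by simp
qed

lemma fS_eq: assumes "right_loop T op u" "x \<in> T" "y \<in> T" "z \<in> T" "X \<in> T"
   "op X (op y z) = op (op x y) z"
  shows "fS T op y z x = X"
proof -
  have f: "fS T op y z x \<in> T" "op (fS T op y z x) (op y z) = op (op x y) z" using fS_char[OF assms(1-4)] by simp_all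
  show ?thesis
    by (rule rl_cancel[OF assms(1) f(1) assms(5) rl_closed[OF assms(1) assms(3,4)]]) (simp add: f(2) assms(6))
qed

lemma fS_Bij: assumes rl: "right_loop T op u" "y \<in> T" "z \<in> T"
  shows "fS T op y z \<in> Bij T"
proof -
  have inj: "inj_on (fS T op y z) T"
  proof (rule inj_onI)
    fix x x' assume h: "x \<in> T" "x' \<in> T" "fS T op y z x = fS T op y z x'"
    have "op (op x y) z = op (op x' y) z" using fS_char[OF rl(1) h(1) rl(2,3)] fS_char[OF rl(1) h(2) rl(2,3)] h(3) by simp
    then have "op x y = op x' y" using rl_cancel[OF rl(1) rl_closed[OF rl(1) h(1) rl(2)] rl_closed[OF rl(1) h(2) rl(2)] rl(3)] by simp
    then show "x = x'" using rl_cancel[OF rl(1) h(1,2) rl(2)] by simp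
  qed
  have surj: "fS T op y z ` T = T"
  proof
    show "fS T op y z ` T \<subseteq> T" using fS_char[OF rl(1) _ rl(2,3)] by blast
    show "T \<subseteq> fS T op y z ` T"
    proof
      fix X assume X: "X \<in> T"
      define w where "w = ldiv T op (op X (op y z)) z"
      define x where "x = ldiv T op w y"
      have w: "w \<in> T" "op w z = op X (op y z)" unfolding w_def using rl_ldiv[OF rl(1) rl(3) rl_closed[OF rl(1) X rl_closed[OF rl(1) rl(2,3)]]] by simp_all
      have x: "x \<in> T" "op x y = w" unfolding x_def using rl_ldiv[OF rl(1) rl(2) w(1)] by simp_all
      have "fS T op y z x = X" using fS_eq[OF rl(1) x(1) rl(2,3) X] x w by simp
      then show "X \<in> fS T op y z ` T" using x by blast
    qed
  qed
  have "fS T op y z \<in> extensional T" unfolding fS_def by (rule restrict_extensional)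
  then show ?thesis unfolding Bij_def using inj surj
    by (simp add: bij_betw_def)
qed

lemma GS_group: assumes "right_loop T op u" shows "group (GS T op)"
proof -
  have "{fS T op y z | y z. y \<in> T \<and> z \<in> T} \<subseteq> carrier (BijGroup T)"
    using fS_Bij[OF assms] by (auto simp: BijGroup_def)
  then have "subgroup (generate (BijGroup T) {fS T op y z | y z. y \<in> T \<and> z \<in> T}) (BijGroup T)"
    by (simp add: group.generate_is_subgroup group_BijGroup)
  then show ?thesis unfolding GS_def
    by (simp add: group.subgroup_imp_group group_BijGroup)
qed


section \<open>Congruences\<close>

locale rlcong =
  fixes S :: "'a set" and m :: "'a \<Rightarrow> 'a \<Rightarrow> 'a" and e :: 'a and \<zeta> :: "('a \<times> 'a) set"
  assumes rl: "right_loop S m e" and cong: "rl_congruence S m e \<zeta>"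
begin

lemma eqv: "equiv S \<zeta>" using cong by (simp add: rl_congruence_def)
lemma zsub: "\<zeta> \<subseteq> S \<times> S" using cong by (simp add: rl_congruence_def right_subloop_def)
lemma zrl: "right_loop \<zeta> (pair_op m) (e, e)" using cong by (simp add: rl_congruence_def right_subloop_def)

lemma zS: "(a, b) \<in> \<zeta> \<Longrightarrow> a \<in> S \<and> b \<in> S" using zsub by blast
lemma zrefl: "a \<in> S \<Longrightarrow> (a, a) \<in> \<zeta>" using eqv by (simp add: equiv_def refl_on_def)
lemma zsym: "(a, b) \<in> \<zeta> \<Longrightarrow> (b, a) \<in> \<zeta>" using eqv by (meson equiv_def symD)
lemma ztrans: "(a, b) \<in> \<zeta> \<Longrightarrow> (b, c) \<in> \<zeta> \<Longrightarrow> (a, c) \<in> \<zeta>" using eqv by (meson equiv_def transD)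
lemma zmult: "(a, b) \<in> \<zeta> \<Longrightarrow> (c, d) \<in> \<zeta> \<Longrightarrow> (m a c, m b d) \<in> \<zeta>"
  using rl_closed[OF zrl, of "(a,b)" "(c,d)"] by (simp add: pair_op_def)

lemma zdiv: assumes "x \<in> S" "y \<in> S" "a \<in> S" "(m x a, m y a) \<in> \<zeta>" shows "(x, y) \<in> \<zeta>"
proof -
  define P where "P = ldiv \<zeta> (pair_op m) (m x a, m y a) (a, a)"
  have P: "P \<in> \<zeta>" "pair_op m P (a, a) = (m x a, m y a)"
    unfolding P_def using rl_ldiv[OF zrl zrefl[OF assms(3)] assms(4)] by simp_all
  obtain p q where pq: "P = (p, q)" by (cases P)
  have pqS: "p \<in> S" "q \<in> S" using zS P(1) pq by auto
  have "m p a = m x a" "m q a = m y a" using P(2) pq by (simp_all add: pair_op_def)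
  then have "p = x" "q = y" using rl_cancel[OF rl pqS(1) assms(1,3)] rl_cancel[OF rl pqS(2) assms(2,3)] by simp_all
  then show ?thesis using P(1) pq by simp
qed

abbreviation "Z \<equiv> \<zeta> `` {e}"

lemma Z_iff: "c \<in> Z \<longleftrightarrow> (e, c) \<in> \<zeta>" by simp

lemma e_in_S: "e \<in> S" using rl by (rule rl_one)

lemma Z_S: "c \<in> Z \<Longrightarrow> c \<in> S" using zS by auto

lemma zZx: "c \<in> Z \<Longrightarrow> x \<in> S \<Longrightarrow> (x, m c x) \<in> \<zeta>"
  using zmult[of e c x x] zrefl[of x] rl_lid[OF rl, of x] by simp

lemma z_decomp: assumes "(x, y) \<in> \<zeta>" shows "ldiv S m y x \<in> Z \<and> m (ldiv S m y x) x = y"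
proof -
  have xy: "x \<in> S" "y \<in> S" using zS assms by auto
  have c: "ldiv S m y x \<in> S" "m (ldiv S m y x) x = y" using rl_ldiv[OF rl xy] by simp_all
  have "(m (ldiv S m y x) x, m e x) \<in> \<zeta>" using c(2) rl_lid[OF rl xy(1)] zsym[OF assms] by simp
  then have "(ldiv S m y x, e) \<in> \<zeta>" by (rule zdiv[OF c(1) e_in_S xy(1)])
  then show ?thesis using c zsym by auto
qed

lemma rcos_class: assumes "x \<in> S" shows "rcos m Z x = \<zeta> `` {x}"
proof
  show "rcos m Z x \<subseteq> \<zeta> `` {x}" unfolding rcos_def using zZx[OF _ assms] by auto
  show "\<zeta> `` {x} \<subseteq> rcos m Z x"
  proof
    fix y assume "y \<in> \<zeta> `` {x}"
    then have "(x, y) \<in> \<zeta>" by simp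
    from z_decomp[OF this] show "y \<in> rcos m Z x" unfolding rcos_def by (metis image_eqI)
  qed
qed

end


locale rlcenter = rlcong +
  assumes cent: "centralizes S m e (S \<times> S) \<zeta>"
begin

lemma center_props: assumes c: "(e, c) \<in> \<zeta>"
  shows "(\<forall>u\<in>S. \<forall>w\<in>S. m (m c u) w = m c (m u w)) \<and> (\<forall>d\<in>S. m c d = m d c)"
proof -
  obtain C where C1: "rl_congruence \<zeta> (pair_op m) (e, e) C"
    and C2: "\<forall>x y. (x, y) \<in> \<zeta> \<longrightarrow> bij_betw fst (C `` {(x, y)}) ((S \<times> S) `` {x})"
    and C3: "\<forall>x y. (x, y) \<in> S \<times> S \<longrightarrow> ((x, x), (y, y)) \<in> C"
    using cent unfolding centralizes_def by blast
  have Ceq: "equiv \<zeta> C" using C1 by (simp add: rl_congruence_def)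
  have Csub: "C \<subseteq> \<zeta> \<times> \<zeta>" using C1 by (simp add: rl_congruence_def right_subloop_def)
  have Crl: "right_loop C (pair_op (pair_op m)) ((e, e), (e, e))"
    using C1 by (simp add: rl_congruence_def right_subloop_def)
  have Cmul: "\<And>p q. p \<in> C \<Longrightarrow> q \<in> C \<Longrightarrow> pair_op (pair_op m) p q \<in> C"
    using rl_closed[OF Crl] by blast
  have Crefl: "\<And>p. p \<in> \<zeta> \<Longrightarrow> (p, p) \<in> C" using Ceq by (simp add: equiv_def refl_on_def)
  have Cinj: "\<And>x y. (x, y) \<in> \<zeta> \<Longrightarrow> inj_on fst (C `` {(x, y)})"
    using C2 by (simp add: bij_betw_def)
  have cS: "c \<in> S" using zS c by blast
  have eS: "e \<in> S" by (rule e_in_S)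
  note lid = rl_lid[OF rl] and rid = rl_rid[OF rl] and cl = rl_closed[OF rl]
  have b: "((e, c), (u, m c u)) \<in> C" if u: "u \<in> S" for u
  proof -
    have "pair_op (pair_op m) ((e, c), (e, c)) ((e, e), (u, u)) \<in> C"
      using Cmul[OF Crefl[OF c] C3[rule_format, of e u]] eS u by simp
    then show ?thesis using lid[OF eS] rid[OF cS] lid[OF u] by (simp add: pair_op_def)
  qed
  have nuc: "m (m c u) w = m c (m u w)" if u: "u \<in> S" and w: "w \<in> S" for u w
  proof -
    have "pair_op (pair_op m) ((e, c), (u, m c u)) ((e, e), (w, w)) \<in> C"
      using Cmul[OF b[OF u] C3[rule_format, of e w]] eS w by simp
    then have p1: "((e, c), (m u w, m (m c u) w)) \<in> C"
      using lid[OF eS] rid[OF cS] by (simp add: pair_op_def)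
    have p2: "((e, c), (m u w, m c (m u w))) \<in> C" using b[OF cl[OF u w]] .
    have "(m u w, m (m c u) w) = (m u w, m c (m u w))"
      using inj_onD[OF Cinj[OF c], of "(m u w, m (m c u) w)" "(m u w, m c (m u w))"] p1 p2 by simp
    then show ?thesis by simp
  qed
  have com: "m c d = m d c" if d: "d \<in> S" for d
  proof -
    have "pair_op (pair_op m) ((d, d), (e, e)) ((e, c), (d, m c d)) \<in> C"
      using Cmul[OF C3[rule_format, of d e] b[OF d]] eS d by simp
    then have p1: "((d, m d c), (d, m c d)) \<in> C"
      using lid[OF eS] rid[OF d] lid[OF d] lid[OF cl[OF cS d]] by (simp add: pair_op_def)
    have dz: "(d, m d c) \<in> \<zeta>" using Csub p1 by blast
    have p2: "((d, m d c), (d, m d c)) \<in> C" using Crefl[OF dz] .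
    have "(d, m c d) = (d, m d c)"
      using inj_onD[OF Cinj[OF dz], of "(d, m c d)" "(d, m d c)"] p1 p2 by simp
    then show ?thesis by simp
  qed
  show ?thesis using nuc com by blast
qed

lemma Z_assoc: "c \<in> Z \<Longrightarrow> u \<in> S \<Longrightarrow> w \<in> S \<Longrightarrow> m (m c u) w = m c (m u w)"
  using center_props[of c] by blast
lemma Z_comm: "c \<in> Z \<Longrightarrow> d \<in> S \<Longrightarrow> m c d = m d c"
  using center_props[of c] by blast

end


context rlcong
begin

lemma cl_eq: "x \<in> S \<Longrightarrow> y \<in> S \<Longrightarrow> \<zeta> `` {x} = \<zeta> `` {y} \<longleftrightarrow> (x, y) \<in> \<zeta>"
  using eq_equiv_class_iff[OF eqv] by blast

lemma Q_eq: "quot_carrier S m Z = (\<lambda>x. \<zeta> `` {x}) ` S"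
  unfolding quot_carrier_def using rcos_class by (auto intro!: image_cong)

lemma qop_eq: assumes "a \<in> S" "b \<in> S"
  shows "quot_op S m Z (\<zeta> `` {a}) (\<zeta> `` {b}) = \<zeta> `` {m a b}"
proof -
  define a' where "a' = (SOME x. x \<in> S \<and> \<zeta> `` {a} = rcos m Z x)"
  define b' where "b' = (SOME x. x \<in> S \<and> \<zeta> `` {b} = rcos m Z x)"
  have "\<exists>x. x \<in> S \<and> \<zeta> `` {a} = rcos m Z x" using assms(1) rcos_class by metis
  then have a': "a' \<in> S \<and> \<zeta> `` {a} = rcos m Z a'" unfolding a'_def by (rule someI_ex)
  have "\<exists>x. x \<in> S \<and> \<zeta> `` {b} = rcos m Z x" using assms(2) rcos_class by metis
  then have b': "b' \<in> S \<and> \<zeta> `` {b} = rcos m Z b'" unfolding b'_def by (rule someI_ex)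
  have "(a, a') \<in> \<zeta>" using a' rcos_class[of a'] cl_eq[OF assms(1)] by auto
  moreover have "(b, b') \<in> \<zeta>" using b' rcos_class[of b'] cl_eq[OF assms(2)] by auto
  ultimately have ab: "(m a b, m a' b') \<in> \<zeta>" by (rule zmult)
  have "quot_op S m Z (\<zeta> `` {a}) (\<zeta> `` {b}) = rcos m Z (m a' b')"
    unfolding quot_op_def a'_def b'_def ..
  also have "\<dots> = \<zeta> `` {m a' b'}" using rcos_class rl_closed[OF rl] a' b' by simp
  also have "\<dots> = \<zeta> `` {m a b}" using ab cl_eq rl_closed[OF rl] a' b' assms by metis
  finally show ?thesis .
qed

lemma quot_rl: "right_loop (quot_carrier S m Z) (quot_op S m Z) Z"
proof -
  have eS: "e \<in> S" by (rule e_in_S)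
  note cl = rl_closed[OF rl]
  have 1: "Z \<in> quot_carrier S m Z" unfolding Q_eq using eS by blast
  have 2: "\<forall>A\<in>quot_carrier S m Z. \<forall>B\<in>quot_carrier S m Z. quot_op S m Z A B \<in> quot_carrier S m Z"
    unfolding Q_eq using qop_eq cl by auto
  have 3: "\<forall>A\<in>quot_carrier S m Z. quot_op S m Z Z A = A \<and> quot_op S m Z A Z = A"
    unfolding Q_eq using qop_eq eS rl_lid[OF rl] rl_rid[OF rl] by auto
  have 4: "\<exists>!X. X \<in> quot_carrier S m Z \<and> quot_op S m Z X A = B"
    if A: "A \<in> quot_carrier S m Z" and B: "B \<in> quot_carrier S m Z" for A B
  proof -
    obtain a where a: "a \<in> S" "A = \<zeta> `` {a}" using A unfolding Q_eq by blast
    obtain b where b: "b \<in> S" "B = \<zeta> `` {b}" using B unfolding Q_eq by blast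
    define d where "d = ldiv S m b a"
    have d: "d \<in> S" "m d a = b" unfolding d_def using rl_ldiv[OF rl a(1) b(1)] by simp_all
    show ?thesis
    proof (rule ex1I)
      show "\<zeta> `` {d} \<in> quot_carrier S m Z \<and> quot_op S m Z (\<zeta> `` {d}) A = B"
        unfolding Q_eq using d a b qop_eq by auto
    next
      fix X assume X: "X \<in> quot_carrier S m Z \<and> quot_op S m Z X A = B"
      then obtain x where x: "x \<in> S" "X = \<zeta> `` {x}" unfolding Q_eq by blast
      have "\<zeta> `` {m x a} = \<zeta> `` {m d a}" using X x qop_eq[OF x(1) a(1)] a b d by simp
      then have "(m x a, m d a) \<in> \<zeta>" using cl_eq cl x(1) a(1) d(1) by blast
      then have "(x, d) \<in> \<zeta>" by (rule zdiv[OF x(1) d(1) a(1)])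
      then show "X = \<zeta> `` {d}" using x cl_eq d(1) by blast
    qed
  qed
  show ?thesis unfolding right_loop_def
    apply (rule conjI, rule 1, rule conjI, rule 2, rule conjI, rule 3)
    apply (intro ballI)
    apply (rule 4)
     apply assumption+
    done
qed

lemma fS_quot: assumes "x \<in> S" "y \<in> S" "z \<in> S"
  shows "fS (quot_carrier S m Z) (quot_op S m Z) (\<zeta> `` {y}) (\<zeta> `` {z}) (\<zeta> `` {x})
         = \<zeta> `` {fS S m y z x}"
proof -
  note cl = rl_closed[OF rl]
  have f: "fS S m y z x \<in> S" "m (fS S m y z x) (m y z) = m (m x y) z"
    using fS_char[OF rl assms] by simp_all
  show ?thesis
  proof (rule fS_eq[OF quot_rl])
    show "\<zeta> `` {x} \<in> quot_carrier S m Z" "\<zeta> `` {y} \<in> quot_carrier S m Z"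
      "\<zeta> `` {z} \<in> quot_carrier S m Z" "\<zeta> `` {fS S m y z x} \<in> quot_carrier S m Z"
      unfolding Q_eq using assms f by auto
    show "quot_op S m Z (\<zeta> `` {fS S m y z x}) (quot_op S m Z (\<zeta> `` {y}) (\<zeta> `` {z})) =
          quot_op S m Z (quot_op S m Z (\<zeta> `` {x}) (\<zeta> `` {y})) (\<zeta> `` {z})"
      using qop_eq assms f cl by simp
  qed
qed

end


lemma Bij_surj: "f \<in> Bij T \<Longrightarrow> f ` T = T" by (simp add: Bij_def bij_betw_def)
lemma Bij_inj: "f \<in> Bij T \<Longrightarrow> inj_on f T" by (simp add: Bij_def bij_betw_def)
lemma Bij_in: "f \<in> Bij T \<Longrightarrow> x \<in> T \<Longrightarrow> f x \<in> T" using Bij_surj by blast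

lemma BG_mult: "f \<in> Bij T \<Longrightarrow> g \<in> Bij T \<Longrightarrow> f \<otimes>\<^bsub>BijGroup T\<^esub> g = compose T f g"
  by (simp add: BijGroup_def)
lemma BG_mult_app: "f \<in> Bij T \<Longrightarrow> g \<in> Bij T \<Longrightarrow> x \<in> T \<Longrightarrow> (f \<otimes>\<^bsub>BijGroup T\<^esub> g) x = f (g x)"
  by (simp add: BG_mult compose_eq)
lemma BG_mult_Bij: "f \<in> Bij T \<Longrightarrow> g \<in> Bij T \<Longrightarrow> f \<otimes>\<^bsub>BijGroup T\<^esub> g \<in> Bij T"
  by (simp add: BG_mult compose_Bij)
lemma BG_one: "\<one>\<^bsub>BijGroup T\<^esub> = (\<lambda>x\<in>T. x)" by (simp add: BijGroup_def)
lemma BG_carrier: "carrier (BijGroup T) = Bij T" by (simp add: BijGroup_def)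

lemma GS_simps: "carrier (GS T op) = generate (BijGroup T) {fS T op y z | y z. y \<in> T \<and> z \<in> T}"
  "mult (GS T op) = mult (BijGroup T)" "one (GS T op) = one (BijGroup T)"
  by (simp_all add: GS_def)

lemma GS_subgroup: assumes "right_loop T op u"
  shows "subgroup (carrier (GS T op)) (BijGroup T)"
proof -
  have "{fS T op y z | y z. y \<in> T \<and> z \<in> T} \<subseteq> carrier (BijGroup T)"
    using fS_Bij[OF assms] by (auto simp: BijGroup_def)
  then show ?thesis unfolding GS_simps
    by (simp add: group.generate_is_subgroup group_BijGroup)
qed

lemma GS_Bij: "right_loop T op u \<Longrightarrow> g \<in> carrier (GS T op) \<Longrightarrow> g \<in> Bij T"
proof -
  assume a: "right_loop T op u" "g \<in> carrier (GS T op)"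
  have "carrier (GS T op) \<subseteq> carrier (BijGroup T)" by (rule subgroup.subset[OF GS_subgroup[OF a(1)]])
  then show "g \<in> Bij T" using a(2) unfolding BG_carrier by (rule subsetD)
qed

lemma GS_inv: assumes "right_loop T op u" "g \<in> carrier (GS T op)"
  shows "inv\<^bsub>GS T op\<^esub> g = (\<lambda>x\<in>T. inv_into T g x)"
proof -
  have "inv\<^bsub>GS T op\<^esub> g = inv\<^bsub>BijGroup T\<^esub> g"
    using group.m_inv_consistent[OF group_BijGroup GS_subgroup[OF assms(1)] assms(2)]
    unfolding GS_def by simp
  then show ?thesis using inv_BijGroup GS_Bij[OF assms] by simp
qed

context rlcenter
begin

lemma G1_gen: assumes h: "h = fS S m y z" "y \<in> S" "z \<in> S"
  shows "h \<in> Bij S \<and> h e = e \<and> (\<forall>c\<in>Z. \<forall>x\<in>S. h (m c x) = m c (h x))"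
proof -
  have eS: "e \<in> S" by (rule e_in_S)
  note cl = rl_closed[OF rl]
  have "h e = e" unfolding h(1)
    by (rule fS_eq[OF rl eS h(2,3) eS]) (simp add: rl_lid[OF rl] h cl)
  moreover have "h (m c x) = m c (h x)" if c: "c \<in> Z" and x: "x \<in> S" for c x
  proof -
    have cS: "c \<in> S" using Z_S c .
    have f: "h x \<in> S" "m (h x) (m y z) = m (m x y) z" using fS_char[OF rl x h(2,3)] h(1) by simp_all
    show ?thesis unfolding h(1)
    proof (rule fS_eq[OF rl cl[OF cS x] h(2,3)])
      show "m c (fS S m y z x) \<in> S" using f h(1) cl cS by simp
      have "m (m c (fS S m y z x)) (m y z) = m c (m (fS S m y z x) (m y z))"
        using Z_assoc[OF c] f h(1) cl h by simp
      also have "\<dots> = m c (m (m x y) z)" using f h(1) by simp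
      also have "\<dots> = m (m c (m x y)) z" using Z_assoc[OF c] cl x h by simp
      also have "\<dots> = m (m (m c x) y) z" using Z_assoc[OF c] x h by simp
      finally show "m (m c (fS S m y z x)) (m y z) = m (m (m c x) y) z" .
    qed
  qed
  ultimately show ?thesis using fS_Bij[OF rl h(2,3)] h(1) by blast
qed

lemma G1: assumes "g \<in> carrier (GS S m)"
  shows "g \<in> Bij S \<and> g e = e \<and> (\<forall>c\<in>Z. \<forall>x\<in>S. g (m c x) = m c (g x))"
  using assms unfolding GS_simps
proof (induction rule: generate.induct)
  case one
  have eS: "e \<in> S" by (rule e_in_S)
  have "\<one>\<^bsub>BijGroup S\<^esub> \<in> Bij S" unfolding BG_one by (rule id_Bij)
  moreover have "\<one>\<^bsub>BijGroup S\<^esub> e = e" using eS by (simp add: BG_one)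
  moreover have "\<forall>c\<in>Z. \<forall>x\<in>S. \<one>\<^bsub>BijGroup S\<^esub> (m c x) = m c (\<one>\<^bsub>BijGroup S\<^esub> x)"
    using Z_S rl_closed[OF rl] by (simp add: BG_one)
  ultimately show ?case by blast
next
  case (incl h)
  then obtain y z where h: "h = fS S m y z" "y \<in> S" "z \<in> S" by blast
  show ?case by (rule G1_gen[OF h])
next
  case (inv h)
  then obtain y z where h: "h = fS S m y z" "y \<in> S" "z \<in> S" by blast
  have P: "h \<in> Bij S" "h e = e" "\<And>c x. c \<in> Z \<Longrightarrow> x \<in> S \<Longrightarrow> h (m c x) = m c (h x)"
    using G1_gen[OF h] by blast+
  have eS: "e \<in> S" by (rule e_in_S)
  note cl = rl_closed[OF rl]
  have I: "inv\<^bsub>BijGroup S\<^esub> h = (\<lambda>x\<in>S. inv_into S h x)" by (rule inv_BijGroup[OF P(1)])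
  have 1: "inv\<^bsub>BijGroup S\<^esub> h \<in> Bij S" unfolding I by (rule restrict_inv_into_Bij[OF P(1)])
  have 2: "(inv\<^bsub>BijGroup S\<^esub> h) e = e" unfolding I using inv_into_f_eq[OF Bij_inj[OF P(1)] eS P(2)] eS by simp
  have 3: "(inv\<^bsub>BijGroup S\<^esub> h) (m c x) = m c ((inv\<^bsub>BijGroup S\<^esub> h) x)" if c: "c \<in> Z" and x: "x \<in> S" for c x
  proof -
    have cS: "c \<in> S" using Z_S c .
    have xi: "x \<in> h ` S" using Bij_surj[OF P(1)] x by simp
    define x' where "x' = inv_into S h x"
    have x': "x' \<in> S" "h x' = x" unfolding x'_def using inv_into_into[OF xi] f_inv_into_f[OF xi] by simp_all
    have "h (m c x') = m c x" using P(3)[OF c x'(1)] x'(2) by simp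
    then have "inv_into S h (m c x) = m c x'" using inv_into_f_eq[OF Bij_inj[OF P(1)] cl[OF cS x'(1)]] by simp
    then show ?thesis unfolding I using x cl[OF cS x] x'_def by simp
  qed
  show ?case using 1 2 3 by blast
next
  case (eng h1 h2)
  have eS: "e \<in> S" by (rule e_in_S)
  note cl = rl_closed[OF rl]
  have B: "h1 \<in> Bij S" "h2 \<in> Bij S" using eng.IH by blast+
  have 1: "h1 \<otimes>\<^bsub>BijGroup S\<^esub> h2 \<in> Bij S" by (rule BG_mult_Bij[OF B])
  have 2: "(h1 \<otimes>\<^bsub>BijGroup S\<^esub> h2) e = e" using BG_mult_app[OF B eS] eng.IH by simp
  have 3: "(h1 \<otimes>\<^bsub>BijGroup S\<^esub> h2) (m c x) = m c ((h1 \<otimes>\<^bsub>BijGroup S\<^esub> h2) x)" if c: "c \<in> Z" and x: "x \<in> S" for c x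
  proof -
    have cS: "c \<in> S" using Z_S c .
    have "h2 x \<in> S" using Bij_in[OF B(2) x] .
    then show ?thesis using BG_mult_app[OF B x] BG_mult_app[OF B cl[OF cS x]] eng.IH c x by simp
  qed
  show ?case using 1 2 3 by blast
qed

end


locale mainloc = rlcenter +
  fixes \<theta> :: "('a \<Rightarrow> 'a) \<Rightarrow> ('a set \<Rightarrow> 'a set)"
  assumes hom: "\<theta> \<in> hom (GS S m) (GS (quot_carrier S m (\<zeta> `` {e})) (quot_op S m (\<zeta> `` {e})))"
    and gen: "\<forall>y\<in>S. \<forall>z\<in>S. \<theta> (fS S m y z) =
           fS (quot_carrier S m (\<zeta> `` {e})) (quot_op S m (\<zeta> `` {e}))
              (rcos m (\<zeta> `` {e}) y) (rcos m (\<zeta> `` {e}) z)"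
begin

abbreviation "Q \<equiv> quot_carrier S m Z"
abbreviation "qop \<equiv> quot_op S m Z"

lemma ghom: "group_hom (GS S m) (GS Q qop) \<theta>"
  by (rule group_hom.intro[OF GS_group[OF rl] GS_group[OF quot_rl] group_hom_axioms.intro[OF hom]])

lemma cl_Q: "x \<in> S \<Longrightarrow> \<zeta> `` {x} \<in> Q" unfolding Q_eq by blast

lemma G2_gen: assumes h: "h = fS S m y z" "y \<in> S" "z \<in> S" and x: "x \<in> S"
  shows "\<theta> h (\<zeta> `` {x}) = \<zeta> `` {h x}"
  using gen h rcos_class fS_quot[OF x h(2,3)] by simp

lemma G2: assumes "g \<in> carrier (GS S m)"
  shows "\<forall>x\<in>S. \<theta> g (\<zeta> `` {x}) = \<zeta> `` {g x}"
  using assms unfolding GS_simps(1)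
proof (induction rule: generate.induct)
  case one
  have eq: "\<theta> \<one>\<^bsub>BijGroup S\<^esub> = \<one>\<^bsub>BijGroup Q\<^esub>"
    using group_hom.hom_one[OF ghom] unfolding GS_simps by simp
  show ?case unfolding eq unfolding BG_one using cl_Q by simp
next
  case (incl h)
  then obtain y z where h: "h = fS S m y z" "y \<in> S" "z \<in> S" by blast
  show ?case using G2_gen[OF h] by blast
next
  case (inv h)
  then obtain y z where h: "h = fS S m y z" "y \<in> S" "z \<in> S" by blast
  have hc: "h \<in> carrier (GS S m)" unfolding GS_simps using h by (blast intro: generate.incl)
  have hB: "h \<in> Bij S" by (rule GS_Bij[OF rl hc])
  have th: "\<theta> h \<in> carrier (GS Q qop)" by (rule hom_in_carrier[OF hom hc])
  have thB: "\<theta> h \<in> Bij Q" by (rule GS_Bij[OF quot_rl th])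
  have "inv\<^bsub>BijGroup S\<^esub> h = inv\<^bsub>GS S m\<^esub> h" using GS_inv[OF rl hc] inv_BijGroup[OF hB] by simp
  then have "\<theta> (inv\<^bsub>BijGroup S\<^esub> h) = inv\<^bsub>GS Q qop\<^esub> (\<theta> h)"
    using group_hom.hom_inv[OF ghom hc] by simp
  also have "\<dots> = (\<lambda>A\<in>Q. inv_into Q (\<theta> h) A)" by (rule GS_inv[OF quot_rl th])
  finally have I1: "\<theta> (inv\<^bsub>BijGroup S\<^esub> h) = (\<lambda>A\<in>Q. inv_into Q (\<theta> h) A)" .
  have I2: "inv\<^bsub>BijGroup S\<^esub> h = (\<lambda>x\<in>S. inv_into S h x)" by (rule inv_BijGroup[OF hB])
  show ?case
  proof
    fix x assume x: "x \<in> S"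
    have xi: "x \<in> h ` S" using Bij_surj[OF hB] x by simp
    define x' where "x' = inv_into S h x"
    have x': "x' \<in> S" "h x' = x" unfolding x'_def using inv_into_into[OF xi] f_inv_into_f[OF xi] by simp_all
    have "\<theta> h (\<zeta> `` {x'}) = \<zeta> `` {x}" using G2_gen[OF h x'(1)] x'(2) by simp
    then have "inv_into Q (\<theta> h) (\<zeta> `` {x}) = \<zeta> `` {x'}"
      by (rule inv_into_f_eq[OF Bij_inj[OF thB] cl_Q[OF x'(1)]])
    then show "\<theta> (inv\<^bsub>BijGroup S\<^esub> h) (\<zeta> `` {x}) = \<zeta> `` {(inv\<^bsub>BijGroup S\<^esub> h) x}"
      unfolding I1 unfolding I2 using x cl_Q[OF x] x'_def by simp
  qed
next
  case (eng h1 h2)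
  have c: "h1 \<in> carrier (GS S m)" "h2 \<in> carrier (GS S m)" using eng.hyps unfolding GS_simps by simp_all
  have B: "h1 \<in> Bij S" "h2 \<in> Bij S" using GS_Bij[OF rl] c by blast+
  have tc: "\<theta> h1 \<in> carrier (GS Q qop)" "\<theta> h2 \<in> carrier (GS Q qop)" using hom_in_carrier[OF hom] c by blast+
  have tB: "\<theta> h1 \<in> Bij Q" "\<theta> h2 \<in> Bij Q" using GS_Bij[OF quot_rl] tc by blast+
  have "\<theta> (h1 \<otimes>\<^bsub>BijGroup S\<^esub> h2) = \<theta> h1 \<otimes>\<^bsub>BijGroup Q\<^esub> \<theta> h2"
    using group_hom.hom_mult[OF ghom c] unfolding GS_simps by simp
  then show ?case
  proof (intro ballI)
    fix x assume x: "x \<in> S"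
    assume eq: "\<theta> (h1 \<otimes>\<^bsub>BijGroup S\<^esub> h2) = \<theta> h1 \<otimes>\<^bsub>BijGroup Q\<^esub> \<theta> h2"
    have "h2 x \<in> S" by (rule Bij_in[OF B(2) x])
    then show "\<theta> (h1 \<otimes>\<^bsub>BijGroup S\<^esub> h2) (\<zeta> `` {x}) = \<zeta> `` {(h1 \<otimes>\<^bsub>BijGroup S\<^esub> h2) x}"
      unfolding eq using BG_mult_app[OF tB cl_Q[OF x]] BG_mult_app[OF B x] eng.IH x by simp
  qed
qed

end


context rlcenter
begin

lemma center_grp: "group (center_group e m Z)"
proof -
  have eS: "e \<in> S" by (rule e_in_S)
  have c1: "m x y \<in> Z" if "x \<in> Z" "y \<in> Z" for x y
    using that zmult[of e x e y] rl_lid[OF rl eS] by simp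
  have c2: "e \<in> Z" using zrefl[OF eS] by simp
  have c3: "m (m x y) z = m x (m y z)" if "x \<in> Z" "y \<in> Z" "z \<in> Z" for x y z
    using that Z_assoc[of x y z] Z_S by simp
  have c4: "m e x = x" if "x \<in> Z" for x using that rl_lid[OF rl] Z_S by simp
  have c5: "\<exists>y\<in>Z. m y x = e" if x: "x \<in> Z" for x
  proof -
    have xS: "x \<in> S" using x Z_S by simp
    define y where "y = ldiv S m e x"
    have y: "y \<in> S" "m y x = e" unfolding y_def using rl_ldiv[OF rl xS eS] by simp_all
    have "(m y x, m e x) \<in> \<zeta>" using y(2) rl_lid[OF rl xS] x by simp
    then have "(y, e) \<in> \<zeta>" by (rule zdiv[OF y(1) eS xS])
    then show ?thesis using y(2) zsym by blast
  qed
  show ?thesis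
    apply (rule groupI)
    using c1 c2 c3 c4 c5 by (simp_all add: center_group_def)
qed

end

context mainloc
begin

lemma ker_char: assumes "g \<in> kernel (GS S m) (GS Q qop) \<theta>"
  shows "g \<in> carrier (GS S m) \<and> (\<forall>x\<in>S. (x, g x) \<in> \<zeta>)"
proof -
  have g: "g \<in> carrier (GS S m)" "\<theta> g = (\<lambda>A\<in>Q. A)"
    using assms by (simp_all add: kernel_def GS_simps BG_one)
  have gB: "g \<in> Bij S" by (rule GS_Bij[OF rl g(1)])
  have "(x, g x) \<in> \<zeta>" if x: "x \<in> S" for x
  proof -
    have "\<theta> g (\<zeta> `` {x}) = \<zeta> `` {g x}" using G2[OF g(1)] x by blast
    moreover have "\<theta> g (\<zeta> `` {x}) = \<zeta> `` {x}" using g(2) cl_Q[OF x] by simp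
    ultimately have "\<zeta> `` {g x} = \<zeta> `` {x}" by simp
    then have "(g x, x) \<in> \<zeta>" using cl_eq Bij_in[OF gB x] x by blast
    then show ?thesis by (rule zsym)
  qed
  then show ?thesis using g(1) by blast
qed

lemma ker_coef: assumes "g \<in> kernel (GS S m) (GS Q qop) \<theta>" "x \<in> S"
  shows "ldiv S m (g x) x \<in> Z \<and> m (ldiv S m (g x) x) x = g x"
  using z_decomp ker_char[OF assms(1)] assms(2) by blast

lemma coef_mult: assumes g: "g \<in> kernel (GS S m) (GS Q qop) \<theta>" and h: "h \<in> kernel (GS S m) (GS Q qop) \<theta>"
  and x: "x \<in> S"
  shows "ldiv S m ((g \<otimes>\<^bsub>BijGroup S\<^esub> h) x) x = m (ldiv S m (g x) x) (ldiv S m (h x) x)"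
proof -
  define a where "a = ldiv S m (g x) x"
  define b where "b = ldiv S m (h x) x"
  have a: "a \<in> Z" "m a x = g x" using ker_coef[OF g x] unfolding a_def by simp_all
  have b: "b \<in> Z" "m b x = h x" using ker_coef[OF h x] unfolding b_def by simp_all
  have gc: "g \<in> carrier (GS S m)" and hc: "h \<in> carrier (GS S m)" using ker_char g h by blast+
  have B: "g \<in> Bij S" "h \<in> Bij S" using GS_Bij[OF rl] gc hc by blast+
  have aS: "a \<in> S" and bS: "b \<in> S" using a b Z_S by blast+
  have "(g \<otimes>\<^bsub>BijGroup S\<^esub> h) x = g (h x)" by (rule BG_mult_app[OF B x])
  also have "\<dots> = g (m b x)" using b by simp
  also have "\<dots> = m b (g x)" using G1[OF gc] b(1) x by blast
  also have "\<dots> = m b (m a x)" using a by simp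
  also have "\<dots> = m (m b a) x" using Z_assoc[OF b(1) aS x] by simp
  also have "\<dots> = m (m a b) x" using Z_comm[OF b(1) aS] by simp
  finally have "(g \<otimes>\<^bsub>BijGroup S\<^esub> h) x = m (m a b) x" .
  then show ?thesis using rl_ldiv_eq[OF rl x rl_closed[OF rl aS bS]] unfolding a_def b_def by simp
qed

end


context mainloc
begin

lemma main_result: assumes fin: "finite S"
  shows "\<exists>H. subgroup H (product_group {..< card Q - 1} (\<lambda>_. center_group e m Z))
          \<and> (GS S m)\<lparr>carrier := kernel (GS S m) (GS Q qop) \<theta>\<rparr>
            \<cong> (product_group {..< card Q - 1} (\<lambda>_. center_group e m Z))\<lparr>carrier := H\<rparr>"
proof -
  define k where "k = card Q"
  define I where "I = {..< k - 1}"
  define P where "P = product_group I (\<lambda>_. center_group e m Z)"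
  define ker where "ker = kernel (GS S m) (GS Q qop) \<theta>"
  define K where "K = (GS S m)\<lparr>carrier := ker\<rparr>"
  have eS: "e \<in> S" by (rule e_in_S)
  have finQ: "finite Q" unfolding Q_eq using fin by simp
  have ZQ: "Z \<in> Q" using cl_Q[OF eS] .
  have cardD: "card (Q - {Z}) = k - 1" unfolding k_def using finQ ZQ by simp
  obtain r where r: "bij_betw r {0..<card (Q - {Z})} (Q - {Z})"
    using ex_bij_betw_nat_finite finQ by blast
  have r': "bij_betw r I (Q - {Z})" using r cardD unfolding I_def by (simp add: atLeast0LessThan)
  define rep where "rep i = (SOME x. x \<in> S \<and> \<zeta> `` {x} = r i)" for i
  have rep: "rep i \<in> S \<and> \<zeta> `` {rep i} = r i" if i: "i \<in> I" for i
  proof -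
    have "r i \<in> Q" using r' i bij_betwE by blast
    then have "\<exists>x. x \<in> S \<and> \<zeta> `` {x} = r i" unfolding Q_eq by blast
    then show ?thesis unfolding rep_def by (rule someI_ex)
  qed
  define \<Phi> where "\<Phi> g = (\<lambda>i\<in>I. ldiv S m (g (rep i)) (rep i))" for g :: "'a \<Rightarrow> 'a"
  have grpGS: "group (GS S m)" by (rule GS_group[OF rl])
  have subK: "subgroup ker (GS S m)" unfolding ker_def by (rule group_hom.subgroup_kernel[OF ghom])
  have grpK: "group K" unfolding K_def by (rule group.subgroup_imp_group[OF grpGS subK])
  have grpP: "group P" unfolding P_def using center_grp by simp
  have Phi_car: "\<Phi> g \<in> carrier P" if g: "g \<in> ker" for g
    unfolding P_def \<Phi>_def using ker_coef[OF g[unfolded ker_def]] rep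
    by (auto simp: center_group_def)
  have Phi_mult: "\<Phi> (g \<otimes>\<^bsub>K\<^esub> h) = \<Phi> g \<otimes>\<^bsub>P\<^esub> \<Phi> h" if g: "g \<in> ker" and h: "h \<in> ker" for g h
  proof -
    have "g \<otimes>\<^bsub>K\<^esub> h = g \<otimes>\<^bsub>BijGroup S\<^esub> h" unfolding K_def by (simp add: GS_simps)
    then show ?thesis unfolding P_def \<Phi>_def
      using coef_mult[OF g[unfolded ker_def] h[unfolded ker_def]] rep
      by (auto simp: center_group_def intro!: restrict_ext)
  qed
  have Phi_hom: "\<Phi> \<in> hom K P"
    unfolding hom_def using Phi_car Phi_mult by (auto simp: K_def)
  have ghP: "group_hom K P \<Phi>"
    by (rule group_hom.intro[OF grpK grpP group_hom_axioms.intro[OF Phi_hom]])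
  have subH: "subgroup (\<Phi> ` ker) P"
    using group_hom.img_is_subgroup[OF ghP] by (simp add: K_def)
  have Phi_inj: "inj_on \<Phi> ker"
  proof (rule inj_onI)
    fix g h assume g: "g \<in> ker" and h: "h \<in> ker" and eq: "\<Phi> g = \<Phi> h"
    have gk: "g \<in> kernel (GS S m) (GS Q qop) \<theta>" and hk: "h \<in> kernel (GS S m) (GS Q qop) \<theta>"
      using g h unfolding ker_def by simp_all
    have gc: "g \<in> carrier (GS S m)" and hc: "h \<in> carrier (GS S m)" using ker_char gk hk by blast+
    have B: "g \<in> Bij S" "h \<in> Bij S" using GS_Bij[OF rl] gc hc by blast+
    have val: "g x = h x" if x: "x \<in> S" for x
    proof (cases "\<zeta> `` {x} = Z")
      case True
      then have xZ: "x \<in> Z" using cl_eq[OF x eS] zsym by simp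
      have "g x = g (m x e)" using rl_rid[OF rl x] by simp
      also have "\<dots> = m x (g e)" using G1[OF gc] xZ eS by blast
      also have "\<dots> = x" using G1[OF gc] rl_rid[OF rl x] by simp
      finally have 1: "g x = x" .
      have "h x = h (m x e)" using rl_rid[OF rl x] by simp
      also have "\<dots> = m x (h e)" using G1[OF hc] xZ eS by blast
      also have "\<dots> = x" using G1[OF hc] rl_rid[OF rl x] by simp
      finally have 2: "h x = x" .
      show ?thesis using 1 2 by simp
    next
      case False
      then have "\<zeta> `` {x} \<in> Q - {Z}" using cl_Q[OF x] by simp
      then obtain i where i: "i \<in> I" "r i = \<zeta> `` {x}" using r' by (metis bij_betw_def imageE)
      have ri: "rep i \<in> S" "\<zeta> `` {rep i} = \<zeta> `` {x}" using rep[OF i(1)] i(2) by simp_all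
      then have "(rep i, x) \<in> \<zeta>" using cl_eq x by blast
      from z_decomp[OF this] obtain c where c: "c \<in> Z" "m c (rep i) = x" by blast
      have gi: "\<Phi> g i = ldiv S m (g (rep i)) (rep i)" "\<Phi> h i = ldiv S m (h (rep i)) (rep i)"
        unfolding \<Phi>_def using i(1) by simp_all
      have "g (rep i) = m (\<Phi> g i) (rep i)" using ker_coef[OF gk ri(1)] gi by simp
      moreover have "h (rep i) = m (\<Phi> h i) (rep i)" using ker_coef[OF hk ri(1)] gi by simp
      ultimately have eqi: "g (rep i) = h (rep i)" using eq by simp
      have "g x = m c (g (rep i))" using G1[OF gc] c ri(1) by blast
      moreover have "h x = m c (h (rep i))" using G1[OF hc] c ri(1) by blast
      ultimately show ?thesis using eqi by simp
    qed
    show "g = h"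
      by (rule extensionalityI[OF Bij_imp_extensional[OF B(1)] Bij_imp_extensional[OF B(2)] val])
  qed
  have "\<Phi> \<in> iso K (P\<lparr>carrier := \<Phi> ` ker\<rparr>)"
    unfolding iso_def hom_def bij_betw_def
    using Phi_mult Phi_inj by (auto simp: K_def)
  then have "K \<cong> P\<lparr>carrier := \<Phi> ` ker\<rparr>" by (rule is_isoI)
  then show ?thesis using subH unfolding K_def P_def ker_def I_def k_def by blast
qed

end


theorem mainTheorem13:
  fixes S :: "'a set" and m :: "'a \<Rightarrow> 'a \<Rightarrow> 'a" and e :: 'a
    and \<zeta> :: "('a \<times> 'a) set" and \<theta> :: "('a \<Rightarrow> 'a) \<Rightarrow> ('a set \<Rightarrow> 'a set)"
  assumes "right_loop S m e" and "finite S"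
    and "is_center_congruence S m e \<zeta>"
    and "\<theta> \<in> hom (GS S m) (GS (quot_carrier S m (\<zeta> `` {e})) (quot_op S m (\<zeta> `` {e})))"
    and "\<forall>y\<in>S. \<forall>z\<in>S. \<theta> (fS S m y z) =
           fS (quot_carrier S m (\<zeta> `` {e})) (quot_op S m (\<zeta> `` {e}))
              (rcos m (\<zeta> `` {e}) y) (rcos m (\<zeta> `` {e}) z)"
  shows "\<exists>H. subgroup H (product_group {..< card (quot_carrier S m (\<zeta> `` {e})) - 1}
                                          (\<lambda>_. center_group e m (\<zeta> `` {e})))
          \<and> (GS S m)\<lparr>carrier := kernel (GS S m)
                (GS (quot_carrier S m (\<zeta> `` {e})) (quot_op S m (\<zeta> `` {e}))) \<theta>\<rparr>
            \<cong> (product_group {..< card (quot_carrier S m (\<zeta> `` {e})) - 1}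
                  (\<lambda>_. center_group e m (\<zeta> `` {e})))\<lparr>carrier := H\<rparr>"
proof -
  interpret mainloc S m e \<zeta> \<theta>
  proof (unfold_locales)
    show "right_loop S m e" by fact
    show "rl_congruence S m e \<zeta>" using assms(3) by (simp add: is_center_congruence_def)
    show "centralizes S m e (S \<times> S) \<zeta>" using assms(3) by (simp add: is_center_congruence_def)
    show "\<theta> \<in> hom (GS S m) (GS (quot_carrier S m (\<zeta> `` {e})) (quot_op S m (\<zeta> `` {e})))" by fact
    show "\<forall>y\<in>S. \<forall>z\<in>S. \<theta> (fS S m y z) =
           fS (quot_carrier S m (\<zeta> `` {e})) (quot_op S m (\<zeta> `` {e}))
              (rcos m (\<zeta> `` {e}) y) (rcos m (\<zeta> `` {e}) z)" by fact
  qed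
  show ?thesis by (rule main_result[OF assms(2)])
qed

end
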